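(* Let $X$ be a compact metric space, $T\colon X\to X$ continuous, and $x\in X$. If $\nu\in V^{\log}(x)$ is an ergodic $T$-invariant measure, then $\nu\in V(x)$.
   Context: For $N\ge1$ let $\mathrm{Emp}(x,N)=\frac1N\sum_{n=1}^N\delta_{T^{n-1}(x)}$, and for $N\ge2$ let $\mathrm{Emp}^{\log}(x,N)=\frac1{\log N}\sum_{n=1}^N\frac1n\delta_{T^{n-1}(x)}$. $V(x)$ is the set of Borel probability measures $\nu$ on $X$ such that $\mathrm{Emp}(x,N_k)\to\nu$ weak-$*$ for some increasing sequence $(N_k)$; $V^{\log}(x)$ is the set of Borel probability measures $\nu$ such that $\mathrm{Emp}^{\log}(x,N_k)\to\nu$ weak-$*$ for some increasing sequence $(N_k)$. *)

theory Defs
  imports "HOL-Probability.Probability"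
begin

definition borel_prob :: "'a::metric_space measure \<Rightarrow> bool" where
  "borel_prob \<nu> \<longleftrightarrow> prob_space \<nu> \<and> sets \<nu> = sets borel"

text \<open>Weak-* convergence of a sequence of (finite Borel) measures: convergence of the
  integrals of every continuous real function (all of which are bounded on a compact space).\<close>
definition weak_star_conv :: "(nat \<Rightarrow> 'a::metric_space measure) \<Rightarrow> 'a measure \<Rightarrow> bool" where
  "weak_star_conv \<mu> \<nu> \<longleftrightarrow>
     (\<forall>f :: 'a \<Rightarrow> real. continuous_on UNIV f \<longrightarrow>
        (\<lambda>k. integral\<^sup>L (\<mu> k) f) \<longlonglongrightarrow> integral\<^sup>L \<nu> f)"

definition Emp :: "('a::metric_space \<Rightarrow> 'a) \<Rightarrow> 'a \<Rightarrow> nat \<Rightarrow> 'a measure" where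
  "Emp T x N = measure_of UNIV (sets borel)
     (\<lambda>A. ennreal ((1 / real N) * (\<Sum>n<N. indicator A ((T ^^ n) x))))"

text \<open>Emp^log(x,N) = (1/log N) sum_{n=1}^N (1/n) delta_{T^{n-1} x}.\<close>
definition Emp_log :: "('a::metric_space \<Rightarrow> 'a) \<Rightarrow> 'a \<Rightarrow> nat \<Rightarrow> 'a measure" where
  "Emp_log T x N = measure_of UNIV (sets borel)
     (\<lambda>A. ennreal ((1 / ln (real N)) * (\<Sum>n<N. (1 / real (Suc n)) * indicator A ((T ^^ n) x))))"

definition V :: "('a::metric_space \<Rightarrow> 'a) \<Rightarrow> 'a \<Rightarrow> 'a measure set" where
  "V T x = {\<nu>. borel_prob \<nu> \<and>
     (\<exists>Ns :: nat \<Rightarrow> nat. strict_mono Ns \<and> (\<forall>k. Ns k \<ge> 1) \<and>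
        weak_star_conv (\<lambda>k. Emp T x (Ns k)) \<nu>)}"

definition V_log :: "('a::metric_space \<Rightarrow> 'a) \<Rightarrow> 'a \<Rightarrow> 'a measure set" where
  "V_log T x = {\<nu>. borel_prob \<nu> \<and>
     (\<exists>Ns :: nat \<Rightarrow> nat. strict_mono Ns \<and> (\<forall>k. Ns k \<ge> 2) \<and>
        weak_star_conv (\<lambda>k. Emp_log T x (Ns k)) \<nu>)}"

definition T_invariant :: "('a::metric_space \<Rightarrow> 'a) \<Rightarrow> 'a measure \<Rightarrow> bool" where
  "T_invariant T \<nu> \<longleftrightarrow> T \<in> measurable \<nu> \<nu> \<and> distr \<nu> \<nu> T = \<nu>"

definition ergodic :: "('a::metric_space \<Rightarrow> 'a) \<Rightarrow> 'a measure \<Rightarrow> bool" where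
  "ergodic T \<nu> \<longleftrightarrow> T_invariant T \<nu> \<and>
     (\<forall>A \<in> sets \<nu>. T -` A \<inter> space \<nu> = A \<longrightarrow> measure \<nu> A = 0 \<or> measure \<nu> A = 1)"

end

theory Submission
  imports Defs
begin


definition Ssum :: "('a \<Rightarrow> 'a) \<Rightarrow> ('a \<Rightarrow> real) \<Rightarrow> nat \<Rightarrow> 'a \<Rightarrow> real" where
  "Ssum T g n y = (\<Sum>t<n. g ((T ^^ t) y))"

lemma Ssum_0[simp]: "Ssum T g 0 y = 0" by (simp add: Ssum_def)

lemma Ssum_Suc': "Ssum T g (Suc n) y = g y + Ssum T g n (T y)"
  unfolding Ssum_def by (subst sum.lessThan_Suc_shift) (simp add: funpow_Suc_right del: funpow.simps)

lemma Ssum_diff_const: "Ssum T (\<lambda>y. g y - d) n y = Ssum T g n y - real n * d"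
  unfolding Ssum_def by (simp add: sum_subtractf)

lemma Ssum_const_diff: "Ssum T (\<lambda>y. d - g y) n y = real n * d - Ssum T g n y"
  unfolding Ssum_def by (simp add: sum_subtractf)

lemma continuous_funpow: fixes T :: "'a::topological_space \<Rightarrow> 'a" shows "continuous_on UNIV T \<Longrightarrow> continuous_on UNIV (T ^^ n)"
proof (induction n)
  case 0
  have "(T ^^ 0) = (\<lambda>x::'a. x)" by (rule ext) simp
  then show ?case by (simp add: continuous_on_id)
next
  case (Suc n)
  have "continuous_on UNIV ((T ^^ n) \<circ> T)"
    using Suc by (intro continuous_on_compose) (auto intro: continuous_on_subset)
  then show ?case by (simp only: funpow_Suc_right)
qed

lemma continuous_Ssum: "continuous_on UNIV T \<Longrightarrow> continuous_on UNIV g \<Longrightarrow> continuous_on UNIV (Ssum T g n)"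
proof -
  assume a: "continuous_on UNIV T" "continuous_on UNIV g"
  have "continuous_on UNIV (\<lambda>y. g ((T ^^ t) y))" for t
    using continuous_on_compose[OF continuous_funpow[OF a(1), of t], of g] a(2)
    by (simp add: o_def continuous_on_subset)
  then show ?thesis unfolding Ssum_def by (intro continuous_on_sum) auto
qed

lemma cont_bounded:
  fixes g :: "'a::metric_space \<Rightarrow> real"
  assumes "compact (UNIV :: 'a set)" "continuous_on UNIV g"
  obtains B where "B > 0" "\<And>y. \<bar>g y\<bar> \<le> B"
proof -
  have "bounded (g ` UNIV)" using assms by (intro compact_imp_bounded compact_continuous_image)
  then obtain a where a: "\<forall>z\<in>g ` UNIV. norm z \<le> a" unfolding bounded_iff by blast
  have "\<bar>g y\<bar> \<le> max a 1" for y
  proof -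
    have "norm (g y) \<le> a" using a by blast
    then show ?thesis by simp
  qed
  then show ?thesis using that[of "max a 1"] by auto
qed

primrec Mx :: "('a \<Rightarrow> 'a) \<Rightarrow> ('a \<Rightarrow> real) \<Rightarrow> nat \<Rightarrow> 'a \<Rightarrow> real" where
  "Mx T g 0 y = 0"
| "Mx T g (Suc n) y = max (Mx T g n y) (Ssum T g (Suc n) y)"

lemma Mx_ge: "k \<le> n \<Longrightarrow> Ssum T g k y \<le> Mx T g n y"
proof (induction n)
  case 0 then show ?case by simp
next
  case (Suc n)
  show ?case
  proof (cases "k = Suc n")
    case True then show ?thesis by simp
  next
    case False then have "k \<le> n" using Suc.prems by simp
    then show ?thesis using Suc.IH by (simp add: le_max_iff_disj)
  qed
qed

lemma Mx_attained: "\<exists>k\<le>n. Mx T g n y = Ssum T g k y"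
proof (induction n)
  case 0 then show ?case by simp
next
  case (Suc n)
  then obtain k where k: "k \<le> n" "Mx T g n y = Ssum T g k y" by blast
  show ?case
  proof (cases "Mx T g n y \<le> Ssum T g (Suc n) y")
    case True then have "Mx T g (Suc n) y = Ssum T g (Suc n) y" by (simp add: max_absorb2)
    then show ?thesis by blast
  next
    case False then have "Mx T g (Suc n) y = Mx T g n y" by (simp add: max_absorb1)
    then show ?thesis using k le_SucI by metis
  qed
qed

lemma Mx_nonneg: "0 \<le> Mx T g n y"
  using Mx_ge[of 0 n T g y] by simp

lemma Mx_mono: "Mx T g n y \<le> Mx T g (Suc n) y" by (simp only: Mx.simps max.cobounded1)

lemma Mx_key: assumes "0 < Mx T g n y" shows "Mx T g n y \<le> g y + Mx T g n (T y)"
proof -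
  obtain k where k: "k \<le> n" "Mx T g n y = Ssum T g k y" using Mx_attained[of n T g y] by blast
  have "k \<noteq> 0"
  proof
    assume "k = 0"
    then have "Mx T g n y = 0" using k(2) by simp
    then show False using assms by simp
  qed
  then obtain j where j: "k = Suc j" using not0_implies_Suc by blast
  have "Ssum T g j (T y) \<le> Mx T g n (T y)" using k(1) j by (intro Mx_ge) simp
  moreover have "Mx T g n y = g y + Ssum T g j (T y)" using k(2) unfolding j Ssum_Suc' .
  ultimately show ?thesis by linarith
qed

lemma continuous_Mx: "continuous_on UNIV T \<Longrightarrow> continuous_on UNIV g \<Longrightarrow> continuous_on UNIV (Mx T g n)"
proof (induction n)
  case 0 then show ?case by (simp add: continuous_on_const)
next
  case (Suc n)
  have "continuous_on UNIV (\<lambda>y. max (Mx T g n y) (Ssum T g (Suc n) y))"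
    using Suc.IH[OF Suc.prems] continuous_Ssum[OF Suc.prems] by (rule continuous_on_max)
  then show ?case by simp
qed

locale erg =
  fixes T :: "'a::metric_space \<Rightarrow> 'a" and \<nu> :: "'a measure"
  assumes cpt: "compact (UNIV :: 'a set)"
    and Tc: "continuous_on UNIV T"
    and prob: "prob_space \<nu>"
    and sets_nu: "sets \<nu> = sets borel"
    and erg: "ergodic T \<nu>"
begin

lemma space_nu: "space \<nu> = UNIV"
  using sets_eq_imp_space_eq[OF sets_nu] by simp

lemma meas: "continuous_on UNIV g \<Longrightarrow> g \<in> borel_measurable \<nu>"
  using borel_measurable_continuous_onI measurable_cong_sets[OF sets_nu refl] by blast

lemma integrable_cont: "continuous_on UNIV (g :: 'a \<Rightarrow> real) \<Longrightarrow> integrable \<nu> g"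
proof -
  assume c: "continuous_on UNIV g"
  obtain B where "\<And>y. \<bar>g y\<bar> \<le> B" using cont_bounded[OF cpt c] by blast
  then show ?thesis using meas[OF c] prob
    by (intro finite_measure.integrable_const_bound[where B=B]) (auto simp: prob_space_def)
qed

lemma T_meas: "T \<in> measurable \<nu> \<nu>"
  using erg unfolding ergodic_def T_invariant_def by auto

lemma invariant_integral:
  assumes c: "continuous_on UNIV (g :: 'a \<Rightarrow> real)"
  shows "integral\<^sup>L \<nu> (\<lambda>y. g (T y)) = integral\<^sup>L \<nu> g"
proof -
  have "distr \<nu> \<nu> T = \<nu>" using erg unfolding ergodic_def T_invariant_def by auto
  then have "integral\<^sup>L \<nu> g = integral\<^sup>L (distr \<nu> \<nu> T) g" by simp
  also have "\<dots> = integral\<^sup>L \<nu> (\<lambda>y. g (T y))"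
    using T_meas meas[OF c] by (intro integral_distr) auto
  finally show ?thesis by simp
qed

lemma integral_const_nu: "integral\<^sup>L \<nu> (\<lambda>y. d) = (d::real)"
  using prob prob_space.prob_space[OF prob] by (simp add: prob_space.emeasure_space_1)

end


lemma dirac_sum_measure:
  fixes p :: "nat \<Rightarrow> 'a::metric_space" and w :: "nat \<Rightarrow> real"
  assumes w: "\<And>n. n < N \<Longrightarrow> 0 \<le> w n"
  shows "measure_of UNIV (sets borel) (\<lambda>A. ennreal (\<Sum>n<N. w n * indicator A (p n)))
     = distr (density (count_space {..<N}) (\<lambda>n. ennreal (w n))) borel p"
proof -
  let ?D = "distr (density (count_space {..<N}) (\<lambda>n. ennreal (w n))) borel p"
  have em: "emeasure ?D A = ennreal (\<Sum>n<N. w n * indicator A (p n))" if A: "A \<in> sets borel" for A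
  proof -
    have "emeasure ?D A = emeasure (density (count_space {..<N}) (\<lambda>n. ennreal (w n))) (p -` A \<inter> {..<N})"
      using A by (subst emeasure_distr) auto
    also have "\<dots> = (\<integral>\<^sup>+ n. ennreal (w n) * indicator (p -` A \<inter> {..<N}) n \<partial>count_space {..<N})"
      by (subst emeasure_density) auto
    also have "\<dots> = (\<Sum>n<N. ennreal (w n) * indicator (p -` A \<inter> {..<N}) n)"
      by (subst nn_integral_count_space_finite) auto
    also have "\<dots> = (\<Sum>n<N. ennreal (w n * indicator A (p n)))"
      by (intro sum.cong refl) (auto simp: indicator_def)
    also have "\<dots> = ennreal (\<Sum>n<N. w n * indicator A (p n))"
      using w by (intro sum_ennreal) (auto simp: indicator_def)
    finally show ?thesis .
  qed
  have "measure_of UNIV (sets borel) (\<lambda>A. ennreal (\<Sum>n<N. w n * indicator A (p n)))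
      = measure_of UNIV (sets borel) (emeasure ?D)"
    by (rule measure_of_eq) (auto simp: em sets.sigma_sets_eq[of borel, simplified])
  also have "\<dots> = ?D"
    using measure_of_of_measure[of ?D] by simp
  finally show ?thesis .
qed

lemma dirac_sum_integral:
  fixes p :: "nat \<Rightarrow> 'a::metric_space" and w :: "nat \<Rightarrow> real" and f :: "'a \<Rightarrow> real"
  assumes w: "\<And>n. n < N \<Longrightarrow> 0 \<le> w n" and f: "f \<in> borel_measurable borel"
  shows "integral\<^sup>L (measure_of UNIV (sets borel) (\<lambda>A. ennreal (\<Sum>n<N. w n * indicator A (p n)))) f
     = (\<Sum>n<N. w n * f (p n))"
proof -
  have "integral\<^sup>L (distr (density (count_space {..<N}) (\<lambda>n. ennreal (w n))) borel p) f
     = integral\<^sup>L (density (count_space {..<N}) (\<lambda>n. ennreal (w n))) (\<lambda>n. f (p n))"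
    using f by (intro integral_distr) auto
  also have "\<dots> = integral\<^sup>L (count_space {..<N}) (\<lambda>n. w n *\<^sub>R f (p n))"
    using w by (intro integral_density) (auto simp: AE_count_space)
  also have "\<dots> = (\<Sum>n<N. w n * f (p n))"
    by (simp add: lebesgue_integral_count_space_finite)
  finally have *: "integral\<^sup>L (distr (density (count_space {..<N}) (\<lambda>n. ennreal (w n))) borel p) f = (\<Sum>n<N. w n * f (p n))" .
  have eq: "measure_of UNIV (sets borel) (\<lambda>A. ennreal (\<Sum>n<N. w n * indicator A (p n)))
     = distr (density (count_space {..<N}) (\<lambda>n. ennreal (w n))) borel p"
    by (rule dirac_sum_measure) (rule w)
  show ?thesis unfolding eq by (rule *)
qed


context erg begin

lemma integrable_bounded:
  assumes "f \<in> borel_measurable \<nu>" "\<And>y. \<bar>f y\<bar> \<le> B"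
  shows "integrable \<nu> (f :: 'a \<Rightarrow> real)"
  using assms prob by (intro finite_measure.integrable_const_bound[where B=B]) (auto simp: prob_space_def)

lemma open_meas: "open S \<Longrightarrow> S \<in> sets \<nu>"
  using sets_nu by simp

lemma maximal:
  assumes gc: "continuous_on UNIV g"
  shows "0 \<le> integral\<^sup>L \<nu> (\<lambda>y. indicator {y. \<exists>k. 0 < Ssum T g k y} y * g y)"
proof -
  obtain B where B: "\<And>y. \<bar>g y\<bar> \<le> B" using cont_bounded[OF cpt gc] by blast
  let ?E = "\<lambda>n. {y. 0 < Mx T g n y}"
  let ?E' = "{y. \<exists>k. 0 < Ssum T g k y}"
  have Eopen: "open (?E n)" for n
    using continuous_Mx[OF Tc gc, of n] by (intro open_Collect_less) (auto simp: continuous_on_const)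
  have E'open: "open ?E'"
  proof -
    have "?E' = (\<Union>k. {y. 0 < Ssum T g k y})" by blast
    moreover have "open {y. 0 < Ssum T g k y}" for k
      using continuous_Ssum[OF Tc gc, of k] by (intro open_Collect_less) (auto simp: continuous_on_const)
    ultimately show ?thesis by (simp add: open_UN)
  qed
  have gm: "g \<in> borel_measurable \<nu>" using meas[OF gc] .
  have mE: "(\<lambda>y. indicator (?E n) y * g y) \<in> borel_measurable \<nu>" for n
    using gm open_meas[OF Eopen[of n]] by (intro borel_measurable_times borel_measurable_indicator)
  have mE': "(\<lambda>y. indicator ?E' y * g y) \<in> borel_measurable \<nu>"
    using gm open_meas[OF E'open] by (intro borel_measurable_times borel_measurable_indicator)
  have bnd: "\<bar>indicator A y * g y\<bar> \<le> B" for A y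
    using B[of y] by (auto simp: indicator_def)
  have step: "0 \<le> integral\<^sup>L \<nu> (\<lambda>y. indicator (?E n) y * g y)" for n
  proof -
    have Mc: "continuous_on UNIV (Mx T g n)" using continuous_Mx[OF Tc gc] .
    have MTc: "continuous_on UNIV (\<lambda>y. Mx T g n (T y))"
      using continuous_on_compose[OF Tc, of "Mx T g n"] Mc by (simp add: o_def continuous_on_subset)
    have pw: "Mx T g n y - Mx T g n (T y) \<le> indicator (?E n) y * g y" for y
    proof (cases "0 < Mx T g n y")
      case True then show ?thesis using Mx_key[OF True] by simp
    next
      case False
      then have "Mx T g n y = 0" using Mx_nonneg[of T g n y] by linarith
      then show ?thesis using False Mx_nonneg[of T g n "T y"] by simp
    qed
    have "0 = integral\<^sup>L \<nu> (Mx T g n) - integral\<^sup>L \<nu> (\<lambda>y. Mx T g n (T y))"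
      using invariant_integral[OF Mc] by simp
    also have "\<dots> = integral\<^sup>L \<nu> (\<lambda>y. Mx T g n y - Mx T g n (T y))"
      using integrable_cont[OF Mc] integrable_cont[OF MTc] by (simp add: integral_diff)
    also have "\<dots> \<le> integral\<^sup>L \<nu> (\<lambda>y. indicator (?E n) y * g y)"
      using integrable_cont[OF Mc] integrable_cont[OF MTc] pw integrable_bounded[OF mE bnd]
      by (intro integral_mono) auto
    finally show ?thesis .
  qed
  have lim: "(\<lambda>n. integral\<^sup>L \<nu> (\<lambda>y. indicator (?E n) y * g y)) \<longlonglongrightarrow> integral\<^sup>L \<nu> (\<lambda>y. indicator ?E' y * g y)"
  proof (rule integral_dominated_convergence[where w="\<lambda>_. B"])
    show "integrable \<nu> (\<lambda>_. B)" using integrable_bounded[of "\<lambda>_. B" "\<bar>B\<bar>"] by simp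
    show "AE y in \<nu>. norm (indicator (?E n) y * g y) \<le> B" for n using bnd by simp
    show "AE y in \<nu>. (\<lambda>n. indicator (?E n) y * g y) \<longlonglongrightarrow> indicator ?E' y * g y"
    proof (rule AE_I2)
      fix y
      show "(\<lambda>n. indicator (?E n) y * g y) \<longlonglongrightarrow> indicator ?E' y * g y"
      proof (cases "y \<in> ?E'")
        case True
        then obtain k where k: "0 < Ssum T g k y" by blast
        have "eventually (\<lambda>n. indicator (?E n) y * g y = indicator ?E' y * g y) sequentially"
        proof (rule eventually_sequentiallyI[of k])
          fix n assume "k \<le> n"
          then have "0 < Mx T g n y" using Mx_ge[of k n T g y] k by linarith
          then show "indicator (?E n) y * g y = indicator ?E' y * g y" using True by simp
        qed
        then show ?thesis by (rule tendsto_eventually)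
      next
        case False
        have "y \<notin> ?E n" for n
        proof -
          obtain k where "k \<le> n" "Mx T g n y = Ssum T g k y" using Mx_attained[of n T g y] by blast
          then show ?thesis using False by auto
        qed
        then show ?thesis using False by simp
      qed
    qed
  qed (use mE mE' in auto)
  show ?thesis using lim step by (intro LIMSEQ_le_const) auto
qed

lemma integral_diff_const:
  assumes "integrable \<nu> f"
  shows "integral\<^sup>L \<nu> (\<lambda>y. f y - d) = integral\<^sup>L \<nu> f - (d::real)"
    and "integral\<^sup>L \<nu> (\<lambda>y. d - f y) = d - integral\<^sup>L \<nu> f"
proof -
  have ic: "integrable \<nu> (\<lambda>_. d)" using integrable_bounded[of "\<lambda>_. d" "\<bar>d\<bar>"] by simp
  show "integral\<^sup>L \<nu> (\<lambda>y. f y - d) = integral\<^sup>L \<nu> f - d"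
    using Bochner_Integration.integral_diff[OF assms ic] integral_const_nu by simp
  show "integral\<^sup>L \<nu> (\<lambda>y. d - f y) = d - integral\<^sup>L \<nu> f"
    using Bochner_Integration.integral_diff[OF ic assms] integral_const_nu by simp
qed

lemma bounded_above:
  assumes gc: "continuous_on UNIV g" and neg: "integral\<^sup>L \<nu> g < 0"
  shows "AE y in \<nu>. \<exists>m::nat. \<forall>k. Ssum T g k y \<le> real m"
proof -
  obtain B where B: "\<And>y. \<bar>g y\<bar> \<le> B" using cont_bounded[OF cpt gc] by blast
  define C where "C = nat \<lceil>B\<rceil>"
  have BC: "B \<le> real C" unfolding C_def by linarith
  let ?F = "{y. \<forall>m::nat. \<exists>k. real m < Ssum T g k y}"
  have [measurable]: "Ssum T g k \<in> borel_measurable \<nu>" for k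
    using meas[OF continuous_Ssum[OF Tc gc]] .
  have "{y \<in> space \<nu>. \<forall>m::nat. \<exists>k::nat. real m < Ssum T g k y} \<in> sets \<nu>" by measurable
  then have Fm: "?F \<in> sets \<nu>" by (simp add: space_nu)
  have inv: "T -` ?F \<inter> space \<nu> = ?F"
  proof -
    have "T y \<in> ?F \<longleftrightarrow> y \<in> ?F" for y
    proof
      assume Ty: "T y \<in> ?F"
      show "y \<in> ?F"
      proof (rule CollectI, rule allI)
        fix m :: nat
        obtain k where k: "real (m + C) < Ssum T g k (T y)" using Ty by blast
        have "Ssum T g (Suc k) y = g y + Ssum T g k (T y)" by (rule Ssum_Suc')
        then have "real m < Ssum T g (Suc k) y" using k B[of y] BC by simp
        then show "\<exists>k. real m < Ssum T g k y" by blast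
      qed
    next
      assume y: "y \<in> ?F"
      show "T y \<in> ?F"
      proof (rule CollectI, rule allI)
        fix m :: nat
        obtain k where k: "real (m + C) < Ssum T g k y" using y by blast
        have "k \<noteq> 0"
        proof
          assume "k = 0" then show False using k by simp
        qed
        then obtain j where j: "k = Suc j" using not0_implies_Suc by blast
        have "Ssum T g k y = g y + Ssum T g j (T y)" unfolding j by (rule Ssum_Suc')
        then have "real m < Ssum T g j (T y)" using k B[of y] BC by simp
        then show "\<exists>k. real m < Ssum T g k (T y)" by blast
      qed
    qed
    then show ?thesis by (auto simp: space_nu)
  qed
  have "measure \<nu> ?F = 0 \<or> measure \<nu> ?F = 1"
    using erg Fm inv sets_nu unfolding ergodic_def by blast
  then show ?thesis
  proof
    assume F1: "measure \<nu> ?F = 1"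
    have aeF: "AE y in \<nu>. y \<in> ?F" using prob_space.AE_prob_1[OF prob F1] .
    let ?E' = "{y. \<exists>k. 0 < Ssum T g k y}"
    have E'open: "open ?E'"
    proof -
      have "?E' = (\<Union>k. {y. 0 < Ssum T g k y})" by blast
      moreover have "open {y. 0 < Ssum T g k y}" for k
        using continuous_Ssum[OF Tc gc, of k] by (intro open_Collect_less) (auto simp: continuous_on_const)
      ultimately show ?thesis by (simp add: open_UN)
    qed
    have "AE y in \<nu>. indicator ?E' y * g y = g y"
    proof (rule AE_mp[OF aeF], rule AE_I2, rule impI)
      fix y assume "y \<in> ?F"
      then have "\<exists>k. real (0::nat) < Ssum T g k y" by blast
      then have "y \<in> ?E'" by simp
      then show "indicator ?E' y * g y = g y" by simp
    qed
    then have "integral\<^sup>L \<nu> (\<lambda>y. indicator ?E' y * g y) = integral\<^sup>L \<nu> g"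
      by (rule integral_cong_AE[rotated 2])
         (use meas[OF gc] open_meas[OF E'open] in \<open>auto intro!: borel_measurable_times borel_measurable_indicator\<close>)
    then show ?thesis using maximal[OF gc] neg by simp
  next
    assume F0: "measure \<nu> ?F = 0"
    have "emeasure \<nu> ?F = 0"
      using F0 finite_measure.emeasure_eq_measure[of \<nu> ?F] prob by (simp add: prob_space_def)
    then have "?F \<in> null_sets \<nu>" using Fm by auto
    then have "AE y in \<nu>. y \<notin> ?F" by (rule AE_not_in)
    then show ?thesis by (rule AE_mp) (auto simp: not_less)
  qed
qed

lemma conv_from_bounds:
  fixes S :: "nat \<Rightarrow> real"
  assumes "\<And>j. \<exists>m::nat. \<forall>k. \<bar>S k - real k * c\<bar> \<le> real k * inverse (real (Suc j)) + real m"
  shows "(\<lambda>k. S k / real k) \<longlonglongrightarrow> c"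
  unfolding lim_sequentially
proof (intro allI impI)
  fix r :: real assume r: "0 < r"
  obtain j where j: "inverse (real (Suc j)) < r / 2" using reals_Archimedean[of "r/2"] r by auto
  obtain m :: nat where m: "\<And>k. \<bar>S k - real k * c\<bar> \<le> real k * inverse (real (Suc j)) + real m"
    using assms[of j] by blast
  obtain K :: nat where K: "2 * real m / r < real K" using reals_Archimedean2 by blast
  show "\<exists>no. \<forall>n\<ge>no. dist (S n / real n) c < r"
  proof (intro exI[of _ "Suc K"] allI impI)
    fix n assume n: "Suc K \<le> n"
    then have npos: "0 < real n" by simp
    have "real m < r / 2 * real n"
    proof -
      have "2 * real m / r < real n" using K n by linarith
      then show ?thesis using r by (simp add: field_simps)
    qed
    have "dist (S n / real n) c = \<bar>S n - real n * c\<bar> / real n"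
      using npos by (simp add: dist_real_def field_simps)
    also have "\<dots> \<le> (real n * inverse (real (Suc j)) + real m) / real n"
      using m[of n] npos by (simp add: divide_right_mono)
    also have "\<dots> = inverse (real (Suc j)) + real m / real n" using npos by (simp add: field_simps)
    also have "\<dots> < r / 2 + r / 2"
    proof -
      have "real m / real n < r / 2" using \<open>real m < r / 2 * real n\<close> npos by (simp add: divide_less_eq)
      then show ?thesis using j by linarith
    qed
    finally show "dist (S n / real n) c < r" by simp
  qed
qed

lemma ae_conv:
  assumes fc: "continuous_on UNIV f"
  shows "AE y in \<nu>. (\<lambda>k. Ssum T f k y / real k) \<longlonglongrightarrow> integral\<^sup>L \<nu> f"
proof -
  let ?c = "integral\<^sup>L \<nu> f"
  have one: "AE y in \<nu>. \<exists>m::nat. \<forall>k. \<bar>Ssum T f k y - real k * ?c\<bar> \<le> real k * inverse (real (Suc j)) + real m" for j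
  proof -
    let ?e = "inverse (real (Suc j))"
    have c1: "continuous_on UNIV (\<lambda>y. f y - (?c + ?e))" using fc by (intro continuous_intros)
    have c2: "continuous_on UNIV (\<lambda>y. (?c - ?e) - f y)" using fc by (intro continuous_intros)
    have epos: "0 < ?e" by simp
    have i1: "integral\<^sup>L \<nu> (\<lambda>y. f y - (?c + ?e)) < 0"
      using integral_diff_const[OF integrable_cont[OF fc]] epos by simp
    have i2: "integral\<^sup>L \<nu> (\<lambda>y. (?c - ?e) - f y) < 0"
      using integral_diff_const[OF integrable_cont[OF fc]] epos by simp
    show ?thesis
    proof (rule AE_mp[OF eventually_conj[OF bounded_above[OF c1 i1] bounded_above[OF c2 i2]]], rule AE_I2, rule impI)
      fix y
      assume "(\<exists>m::nat. \<forall>k. Ssum T (\<lambda>y. f y - (?c + ?e)) k y \<le> real m) \<and>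
              (\<exists>m::nat. \<forall>k. Ssum T (\<lambda>y. (?c - ?e) - f y) k y \<le> real m)"
      then obtain m1 m2 :: nat where m1: "\<And>k. Ssum T (\<lambda>y. f y - (?c + ?e)) k y \<le> real m1"
        and m2: "\<And>k. Ssum T (\<lambda>y. (?c - ?e) - f y) k y \<le> real m2" by blast
      show "\<exists>m::nat. \<forall>k. \<bar>Ssum T f k y - real k * ?c\<bar> \<le> real k * ?e + real m"
      proof (intro exI[of _ "m1 + m2"] allI)
        fix k
        have "Ssum T f k y - real k * (?c + ?e) \<le> real m1" using m1[of k] by (simp add: Ssum_diff_const)
        moreover have "real k * (?c - ?e) - Ssum T f k y \<le> real m2" using m2[of k] by (simp add: Ssum_const_diff)
        ultimately show "\<bar>Ssum T f k y - real k * ?c\<bar> \<le> real k * ?e + real (m1 + m2)"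
          by (simp add: algebra_simps abs_le_iff)
      qed
    qed
  qed
  have "AE y in \<nu>. \<forall>j. \<exists>m::nat. \<forall>k. \<bar>Ssum T f k y - real k * ?c\<bar> \<le> real k * inverse (real (Suc j)) + real m"
    using one by (simp add: AE_all_countable)
  then show ?thesis by (rule AE_mp) (auto intro!: conv_from_bounds)
qed

lemma Ssum_bound: "(\<And>y. \<bar>f y\<bar> \<le> B) \<Longrightarrow> \<bar>Ssum T f M y\<bar> \<le> real M * B"
proof -
  assume B: "\<And>y. \<bar>f y\<bar> \<le> B"
  have "\<bar>Ssum T f M y\<bar> \<le> (\<Sum>t<M. \<bar>f ((T ^^ t) y)\<bar>)" unfolding Ssum_def by (rule sum_abs)
  also have "\<dots> \<le> (\<Sum>t<M. B)" using B by (intro sum_mono) auto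
  finally show ?thesis by simp
qed

lemma mean_conv:
  assumes fc: "continuous_on UNIV f"
  shows "(\<lambda>M. integral\<^sup>L \<nu> (\<lambda>y. \<bar>Ssum T f M y / real M - integral\<^sup>L \<nu> f\<bar>)) \<longlonglongrightarrow> 0"
proof -
  let ?c = "integral\<^sup>L \<nu> f"
  obtain B where B0: "B > 0" and B: "\<And>y. \<bar>f y\<bar> \<le> B" using cont_bounded[OF cpt fc] by blast
  have bnd: "\<bar>\<bar>Ssum T f M y / real M - ?c\<bar>\<bar> \<le> B + \<bar>?c\<bar>" for M y
  proof -
    have "\<bar>Ssum T f M y / real M\<bar> \<le> B"
    proof (cases "M = 0")
      case True then show ?thesis using B0 by simp
    next
      case False
      then have "\<bar>Ssum T f M y\<bar> / real M \<le> real M * B / real M"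
        using Ssum_bound[OF B] by (intro divide_right_mono) auto
      then show ?thesis using False by simp
    qed
    then show ?thesis by linarith
  qed
  have mc: "(\<lambda>y. \<bar>Ssum T f M y / real M - ?c\<bar>) \<in> borel_measurable \<nu>" for M
    using meas[OF continuous_Ssum[OF Tc fc, of M]] by measurable
  have "(\<lambda>M. integral\<^sup>L \<nu> (\<lambda>y. \<bar>Ssum T f M y / real M - ?c\<bar>)) \<longlonglongrightarrow> integral\<^sup>L \<nu> (\<lambda>y. 0::real)"
  proof (rule integral_dominated_convergence[where w="\<lambda>_. B + \<bar>?c\<bar>"])
    show "integrable \<nu> (\<lambda>_. B + \<bar>?c\<bar>)" using integrable_bounded[of "\<lambda>_. B + \<bar>?c\<bar>" "B + \<bar>?c\<bar>"] B0 by simp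
    show "AE y in \<nu>. norm (\<bar>Ssum T f M y / real M - ?c\<bar>) \<le> B + \<bar>?c\<bar>" for M using bnd by simp
    show "AE y in \<nu>. (\<lambda>M. \<bar>Ssum T f M y / real M - ?c\<bar>) \<longlonglongrightarrow> 0"
    proof (rule AE_mp[OF ae_conv[OF fc]], rule AE_I2, rule impI)
      fix y assume "(\<lambda>k. Ssum T f k y / real k) \<longlonglongrightarrow> ?c"
      then have "(\<lambda>k. Ssum T f k y / real k - ?c) \<longlonglongrightarrow> 0" by (rule LIM_zero)
      then show "(\<lambda>M. \<bar>Ssum T f M y / real M - ?c\<bar>) \<longlonglongrightarrow> 0" using tendsto_rabs by fastforce
    qed
  qed (use mc in auto)
  then show ?thesis by simp
qed

end




lemma abel_identity:
  fixes a :: "nat \<Rightarrow> real"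
  assumes "1 \<le> N"
  shows "(\<Sum>n<N. a n / real (Suc n)) = (\<Sum>t<N. a t) / real N
           + (\<Sum>n\<in>{1..<N}. (\<Sum>t<n. a t) / (real n * real (Suc n)))"
  using assms
proof (induction N rule: dec_induct)
  case base then show ?case by simp
next
  case (step N)
  have N: "0 < real N" using step.hyps by simp
  have "(\<Sum>n<Suc N. a n / real (Suc n)) = (\<Sum>n<N. a n / real (Suc n)) + a N / real (Suc N)" by simp
  also have "\<dots> = (\<Sum>t<N. a t) / real N + (\<Sum>n\<in>{1..<N}. (\<Sum>t<n. a t) / (real n * real (Suc n))) + a N / real (Suc N)"
    using step.IH by simp
  also have "\<dots> = (\<Sum>t<Suc N. a t) / real (Suc N) + (\<Sum>n\<in>{1..<Suc N}. (\<Sum>t<n. a t) / (real n * real (Suc n)))"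
  proof -
    have s: "(\<Sum>n\<in>{1..<Suc N}. (\<Sum>t<n. a t) / (real n * real (Suc n)))
          = (\<Sum>n\<in>{1..<N}. (\<Sum>t<n. a t) / (real n * real (Suc n))) + (\<Sum>t<N. a t) / (real N * real (Suc N))"
      using step.hyps by (simp add: sum.atLeastLessThan_Suc)
    have e1: "(\<Sum>t<N. a t) / real N = (\<Sum>t<N. a t) / real (Suc N) + (\<Sum>t<N. a t) / (real N * real (Suc N))"
      using N by (simp add: divide_simps) (simp add: algebra_simps)
    have e2: "(\<Sum>t<Suc N. a t) / real (Suc N) = (\<Sum>t<N. a t) / real (Suc N) + a N / real (Suc N)"
      by (simp add: add_divide_distrib)
    have "(\<Sum>t<N. a t) / real N + a N / real (Suc N) = (\<Sum>t<Suc N. a t) / real (Suc N) + (\<Sum>t<N. a t) / (real N * real (Suc N))"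
      using e1 e2 by simp
    then show ?thesis using s by simp
  qed
  finally show ?case .
qed

lemma abel_lower:
  fixes a :: "nat \<Rightarrow> real"
  assumes "1 \<le> N0" and nn: "\<And>n. 0 \<le> a n"
    and big: "\<And>n. N0 \<le> n \<Longrightarrow> n < N \<Longrightarrow> \<theta> * real n \<le> (\<Sum>t<n. a t)"
  shows "\<theta> * (\<Sum>n\<in>{N0..<N}. 1 / real (Suc n)) \<le> (\<Sum>n<N. a n / real (Suc n))"
proof (cases "N0 < N")
  case False
  then have "{N0..<N} = {}" by auto
  then show ?thesis using nn by (simp add: sum_nonneg)
next
  case True
  then have N1: "1 \<le> N" using assms(1) by simp
  have Snn: "0 \<le> (\<Sum>t<n. a t)" for n using nn by (simp add: sum_nonneg)
  have "\<theta> * (\<Sum>n\<in>{N0..<N}. 1 / real (Suc n)) = (\<Sum>n\<in>{N0..<N}. \<theta> * real n / (real n * real (Suc n)))"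
    unfolding sum_distrib_left
  proof (intro sum.cong refl)
    fix n assume "n \<in> {N0..<N}"
    then have "0 < real n" using assms(1) by simp
    then show "\<theta> * (1 / real (Suc n)) = \<theta> * real n / (real n * real (Suc n))" by simp
  qed
  also have "\<dots> \<le> (\<Sum>n\<in>{N0..<N}. (\<Sum>t<n. a t) / (real n * real (Suc n)))"
    using big by (intro sum_mono divide_right_mono) auto
  also have "\<dots> \<le> (\<Sum>n\<in>{1..<N}. (\<Sum>t<n. a t) / (real n * real (Suc n)))"
    using assms(1) Snn by (intro sum_mono2) auto
  also have "\<dots> \<le> (\<Sum>t<N. a t) / real N + (\<Sum>n\<in>{1..<N}. (\<Sum>t<n. a t) / (real n * real (Suc n)))"
    using Snn[of N] by simp
  also have "\<dots> = (\<Sum>n<N. a n / real (Suc n))" using abel_identity[OF N1] by simp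
  finally show ?thesis .
qed

lemma harm_tail:
  assumes "N0 \<le> N"
  shows "ln (real N) - real N0 \<le> (\<Sum>n\<in>{N0..<N}. 1 / real (Suc n))"
proof -
  have h: "(\<Sum>n<K. 1 / real (Suc n)) = harm K" for K
    unfolding harm_def by (induction K) (simp_all add: field_simps)
  have split: "(\<Sum>n<N. 1 / real (Suc n)) = (\<Sum>n<N0. 1 / real (Suc n)) + (\<Sum>n\<in>{N0..<N}. 1 / real (Suc n))"
    using assms by (metis sum.atLeastLessThan_concat zero_le atLeast0LessThan)
  have "(\<Sum>n<N0. 1 / real (Suc n)) \<le> (\<Sum>n<N0. 1)" by (intro sum_mono) auto
  then have "(\<Sum>n<N0. 1 / real (Suc n)) \<le> real N0" by simp
  moreover have "ln (real N) \<le> harm N"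
  proof (cases "N = 0")
    case True then show ?thesis by (simp add: harm_nonneg)
  next
    case False
    then have "ln (real N) \<le> ln (real N + 1)" by simp
    also have "\<dots> \<le> harm N" by (rule ln_le_harm)
    finally show ?thesis .
  qed
  ultimately show ?thesis using split h[of N] by linarith
qed

lemma shift_sum:
  fixes a :: "nat \<Rightarrow> real"
  assumes B: "\<And>i. \<bar>a i\<bar> \<le> B"
  shows "\<bar>(\<Sum>s<n. a (s + t)) - (\<Sum>s<n. a s)\<bar> \<le> 2 * real t * B"
proof (induction t)
  case 0 then show ?case by simp
next
  case (Suc t)
  have tel: "(\<Sum>s<n. a (s + Suc t)) = (\<Sum>s<n. a (s + t)) + a (n + t) - a t"
  proof -
    have "(\<Sum>s<Suc n. a (s + t)) = a t + (\<Sum>s<n. a (Suc s + t))" by (subst sum.lessThan_Suc_shift) simp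
    moreover have "(\<Sum>s<Suc n. a (s + t)) = (\<Sum>s<n. a (s + t)) + a (n + t)" by simp
    ultimately show ?thesis by simp
  qed
  have "\<bar>a (n + t) - a t\<bar> \<le> 2 * B" using B[of "n+t"] B[of t] by linarith
  then have "\<bar>(\<Sum>s<n. a (s + t)) - (\<Sum>s<n. a s)\<bar> + \<bar>a (n + t) - a t\<bar> \<le> 2 * real t * B + 2 * B"
    using Suc.IH by (rule add_mono[rotated])
  moreover have "\<bar>(\<Sum>s<n. a (s + Suc t)) - (\<Sum>s<n. a s)\<bar> = \<bar>((\<Sum>s<n. a (s + t)) - (\<Sum>s<n. a s)) + (a (n + t) - a t)\<bar>"
    using tel by simp
  moreover have "\<bar>((\<Sum>s<n. a (s + t)) - (\<Sum>s<n. a s)) + (a (n + t) - a t)\<bar> \<le> \<bar>(\<Sum>s<n. a (s + t)) - (\<Sum>s<n. a s)\<bar> + \<bar>a (n + t) - a t\<bar>"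
    by (rule abs_triangle_ineq)
  moreover have "2 * real (Suc t) * B = 2 * real t * B + 2 * B" by (simp add: algebra_simps)
  ultimately show ?case by linarith
qed

lemma double_avg:
  fixes a :: "nat \<Rightarrow> real"
  assumes B: "\<And>i. \<bar>a i\<bar> \<le> B" and M: "1 \<le> M"
  shows "\<bar>(\<Sum>s<n. (\<Sum>t<M. a (s + t)) / real M) - (\<Sum>s<n. a s)\<bar> \<le> 2 * real M * B"
proof -
  have B0: "0 \<le> B" using B[of 0] by linarith
  have "(\<Sum>s<n. (\<Sum>t<M. a (s + t)) / real M) - (\<Sum>s<n. a s)
      = (\<Sum>t<M. (\<Sum>s<n. a (s + t)) - (\<Sum>s<n. a s)) / real M"
  proof -
    have 1: "(\<Sum>s<n. (\<Sum>t<M. a (s + t)) / real M) = (\<Sum>s<n. \<Sum>t<M. a (s + t)) / real M"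
      by (simp add: sum_divide_distrib)
    have 2: "(\<Sum>s<n. \<Sum>t<M. a (s + t)) = (\<Sum>t<M. \<Sum>s<n. a (s + t))" by (rule sum.swap)
    have 3: "(\<Sum>t<M. (\<Sum>s<n. a (s + t)) - (\<Sum>s<n. a s)) = (\<Sum>t<M. \<Sum>s<n. a (s + t)) - real M * (\<Sum>s<n. a s)"
      by (simp add: sum_subtractf)
    have Mp: "0 < real M" using M by simp
    show ?thesis unfolding 1 2 3 using Mp by (simp add: diff_divide_distrib)
  qed
  also have "\<bar>\<dots>\<bar> \<le> (\<Sum>t<M. 2 * real M * B) / real M"
  proof -
    have "\<bar>\<Sum>t<M. (\<Sum>s<n. a (s + t)) - (\<Sum>s<n. a s)\<bar> \<le> (\<Sum>t<M. \<bar>(\<Sum>s<n. a (s + t)) - (\<Sum>s<n. a s)\<bar>)"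
      by (rule sum_abs)
    also have "\<dots> \<le> (\<Sum>t<M. 2 * real M * B)"
    proof (intro sum_mono)
      fix t assume "t \<in> {..<M}"
      then have "2 * real t * B \<le> 2 * real M * B" using B0 by (intro mult_right_mono) auto
      then show "\<bar>(\<Sum>s<n. a (s + t)) - (\<Sum>s<n. a s)\<bar> \<le> 2 * real M * B" using shift_sum[where a=a and B=B and n=n and t=t, OF B] by linarith
    qed
    finally have X: "\<bar>\<Sum>t<M. (\<Sum>s<n. a (s + t)) - (\<Sum>s<n. a s)\<bar> \<le> real M * (2 * real M * B)" by simp
    have Mp: "0 < real M" using M by simp
    show ?thesis using X Mp by (simp add: abs_divide pos_divide_le_eq mult.commute)
  qed
  also have "\<dots> = 2 * real M * B" using M by simp
  finally show ?thesis .
qed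




lemma Emp_integral:
  assumes "f \<in> borel_measurable borel"
  shows "integral\<^sup>L (Emp T x N) f = Ssum T f N x / real N"
proof -
  have "Emp T x N = measure_of UNIV (sets borel) (\<lambda>A. ennreal (\<Sum>n<N. (1 / real N) * indicator A ((T ^^ n) x)))"
    unfolding Emp_def by (simp add: sum_distrib_left)
  then have "integral\<^sup>L (Emp T x N) f = (\<Sum>n<N. (1 / real N) * f ((T ^^ n) x))"
    using dirac_sum_integral[of N "\<lambda>_. 1 / real N" f "\<lambda>n. (T ^^ n) x"] assms by simp
  then show ?thesis unfolding Ssum_def by (simp add: sum_divide_distrib)
qed

lemma Emp_log_integral:
  assumes "f \<in> borel_measurable borel" and N: "1 \<le> N"
  shows "integral\<^sup>L (Emp_log T x N) f = (\<Sum>n<N. f ((T ^^ n) x) / real (Suc n)) / ln (real N)"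
proof -
  have l: "0 \<le> ln (real N)" using N by simp
  have "Emp_log T x N = measure_of UNIV (sets borel) (\<lambda>A. ennreal (\<Sum>n<N. (1 / ln (real N) * (1 / real (Suc n))) * indicator A ((T ^^ n) x)))"
    unfolding Emp_log_def by (simp add: sum_distrib_left mult.assoc)
  moreover have "integral\<^sup>L (measure_of UNIV (sets borel) (\<lambda>A. ennreal (\<Sum>n<N. (1 / ln (real N) * (1 / real (Suc n))) * indicator A ((T ^^ n) x)))) f
      = (\<Sum>n<N. (1 / ln (real N) * (1 / real (Suc n))) * f ((T ^^ n) x))"
    using l assms(1) by (intro dirac_sum_integral) auto
  ultimately show ?thesis by (simp add: sum_divide_distrib mult.commute)
qed

lemma funpow_comm_apply: "(T ^^ t) ((T ^^ s) x) = (T ^^ (s + t)) x"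
proof -
  have "(T ^^ (t + s)) x = (T ^^ t) ((T ^^ s) x)" by (simp add: funpow_add)
  then show ?thesis by (simp add: add.commute)
qed

lemma cont_div_const: "continuous_on UNIV g \<Longrightarrow> continuous_on UNIV (\<lambda>y. g y / (d::real))"
  unfolding divide_inverse by (intro continuous_intros) auto

context erg begin

lemma K:
  assumes log: "\<And>f::'a \<Rightarrow> real. continuous_on UNIV f \<Longrightarrow> (\<lambda>k. integral\<^sup>L (Emp_log T x (Ns k)) f) \<longlonglongrightarrow> integral\<^sup>L \<nu> f"
    and Ns: "strict_mono Ns" "\<And>k. 2 \<le> Ns k"
    and F: "finite F" "\<And>f. f \<in> F \<Longrightarrow> continuous_on UNIV f"
    and e: "0 < \<epsilon>"
  shows "\<exists>n\<ge>N0. 1 \<le> n \<and> (\<forall>f\<in>F. \<bar>Ssum T f n x / real n - integral\<^sup>L \<nu> f\<bar> < \<epsilon>)"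
proof -
  define Bf where "Bf f = (SOME B. \<forall>y. \<bar>(f::'a\<Rightarrow>real) y\<bar> \<le> B)" for f
  have Bf: "\<bar>f y\<bar> \<le> Bf f" if fF: "f \<in> F" for f y
  proof -
    obtain B where "\<And>y. \<bar>f y\<bar> \<le> B" using cont_bounded[OF cpt F(2)[OF fF]] by blast
    then have "\<exists>B. \<forall>y. \<bar>f y\<bar> \<le> B" by blast
    from someI_ex[OF this] show ?thesis unfolding Bf_def by blast
  qed
  define B where "B = 1 + (\<Sum>f\<in>F. \<bar>Bf f\<bar>)"
  have B0: "0 < B" unfolding B_def by (simp add: sum_nonneg add_pos_nonneg)
  have B: "\<bar>f y\<bar> \<le> B" if "f \<in> F" for f y
  proof -
    have "\<bar>Bf f\<bar> \<le> (\<Sum>f\<in>F. \<bar>Bf f\<bar>)" using F(1) that by (intro member_le_sum) auto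
    then show ?thesis using Bf[OF that, of y] unfolding B_def by linarith
  qed
  define c where "c (f::'a \<Rightarrow> real) = (integral\<^sup>L \<nu> f :: real)" for f
  define h where "h M y = (\<Sum>f\<in>F. \<bar>Ssum T f M y / real M - c f\<bar>)" for M y
  have hc: "continuous_on UNIV (h M)" for M
    unfolding h_def using F(2) continuous_Ssum[OF Tc]
    by (intro continuous_on_sum continuous_intros cont_div_const) auto
  have hnn: "0 \<le> h M y" for M y unfolding h_def by (simp add: sum_nonneg)
  have hlim: "(\<lambda>M. integral\<^sup>L \<nu> (h M)) \<longlonglongrightarrow> 0"
  proof -
    have ci: "continuous_on UNIV (\<lambda>y. \<bar>Ssum T f M y / real M - c f\<bar>)" if "f \<in> F" for f M
      using F(2)[OF that] continuous_Ssum[OF Tc] by (intro continuous_intros cont_div_const) auto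
    have "integral\<^sup>L \<nu> (h M) = (\<Sum>f\<in>F. integral\<^sup>L \<nu> (\<lambda>y. \<bar>Ssum T f M y / real M - c f\<bar>))" for M
      unfolding h_def using ci integrable_cont by (intro Bochner_Integration.integral_sum) auto
    moreover have "(\<lambda>M. \<Sum>f\<in>F. integral\<^sup>L \<nu> (\<lambda>y. \<bar>Ssum T f M y / real M - c f\<bar>)) \<longlonglongrightarrow> 0"
      unfolding c_def using F(2) mean_conv by (intro tendsto_null_sum) auto
    ultimately show ?thesis by simp
  qed
  define \<eta> where "\<eta> = \<epsilon> / 4"
  have eta: "0 < \<eta>" using e unfolding \<eta>_def by simp
  obtain M0 where M0: "\<And>M. M0 \<le> M \<Longrightarrow> dist (integral\<^sup>L \<nu> (h M)) 0 < \<eta>"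
    using hlim eta unfolding lim_sequentially by blast
  define M where "M = max M0 1"
  have M1: "1 \<le> M" unfolding M_def by simp
  have hM: "integral\<^sup>L \<nu> (h M) < \<eta>" using M0[of M] unfolding M_def by (simp add: dist_real_def)
  obtain N1' :: nat where N1': "8 * real M * B / \<epsilon> < real N1'" using reals_Archimedean2 by blast
  define N1 where "N1 = max (max N0 1) N1'"
  have N1: "N0 \<le> N1" "1 \<le> N1" "N1' \<le> N1" unfolding N1_def by auto
  have ev1: "eventually (\<lambda>k. integral\<^sup>L (Emp_log T x (Ns k)) (h M) < \<eta>) sequentially"
    using order_tendstoD(2)[OF log[OF hc] hM] .
  have ev2: "eventually (\<lambda>k. 2 * real N1 < ln (real (Ns k))) sequentially"
  proof -
    obtain K :: nat where K: "exp (2 * real N1) < real K" using reals_Archimedean2 by blast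
    show ?thesis
    proof (rule eventually_sequentiallyI[of K])
      fix k assume "K \<le> k"
      then have "real K \<le> real (Ns k)" using seq_suble[OF Ns(1), of k] by simp
      then have lt: "exp (2 * real N1) < real (Ns k)" using K by linarith
      have "ln (exp (2 * real N1)) < ln (real (Ns k))"
        using lt Ns(2)[of k] by (subst ln_less_cancel_iff) auto
      then show "2 * real N1 < ln (real (Ns k))" by simp
    qed
  qed
  obtain k where k1: "integral\<^sup>L (Emp_log T x (Ns k)) (h M) < \<eta>"
      and k2: "2 * real N1 < ln (real (Ns k))"
    using eventually_happens'[OF _ eventually_conj[OF ev1 ev2]] by auto
  define N where "N = Ns k"
  have N2: "2 \<le> N" unfolding N_def using Ns(2) .
  define a where "a n = h M ((T ^^ n) x)" for n
  have ann: "0 \<le> a n" for n unfolding a_def by (rule hnn)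
  have Sa: "Ssum T (h M) n x = (\<Sum>t<n. a t)" for n unfolding Ssum_def a_def ..
  have lnpos: "0 < ln (real N)" using N2 by simp
  have Lform: "integral\<^sup>L (Emp_log T x N) (h M) = (\<Sum>n<N. a n / real (Suc n)) / ln (real N)"
    unfolding a_def using N2 borel_measurable_continuous_onI[OF hc] by (intro Emp_log_integral) auto
  have k2': "2 * real N1 < ln (real N)" using k2 unfolding N_def .
  have N1N: "N1 \<le> N"
  proof -
    have "ln (real N) < real N" using N2 by (intro ln_less_self) simp
    then show ?thesis using k2' by linarith
  qed
  have "\<exists>n. N1 \<le> n \<and> n < N \<and> Ssum T (h M) n x < 2 * \<eta> * real n"
  proof (rule ccontr)
    assume "\<not> ?thesis"
    then have big: "\<And>n. N1 \<le> n \<Longrightarrow> n < N \<Longrightarrow> 2 * \<eta> * real n \<le> (\<Sum>t<n. a t)"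
      unfolding Sa by (meson not_less)
    have "2 * \<eta> * (\<Sum>n\<in>{N1..<N}. 1 / real (Suc n)) \<le> (\<Sum>n<N. a n / real (Suc n))"
      by (rule abel_lower[OF N1(2) ann big])
    moreover have "ln (real N) - real N1 \<le> (\<Sum>n\<in>{N1..<N}. 1 / real (Suc n))"
      by (rule harm_tail[OF N1N])
    ultimately have "2 * \<eta> * (ln (real N) - real N1) \<le> (\<Sum>n<N. a n / real (Suc n))"
      using eta by (meson mult_left_mono order_trans less_imp_le mult_pos_pos zero_less_numeral)
    moreover have "\<eta> * ln (real N) < 2 * \<eta> * (ln (real N) - real N1)"
      using k2' eta by (simp add: algebra_simps)
    ultimately have "\<eta> * ln (real N) < (\<Sum>n<N. a n / real (Suc n))" by linarith
    then have "\<eta> < (\<Sum>n<N. a n / real (Suc n)) / ln (real N)"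
      using lnpos by (simp add: less_divide_eq)
    then show False using k1 Lform unfolding N_def by simp
  qed
  then obtain n where n: "N1 \<le> n" "n < N" "Ssum T (h M) n x < 2 * \<eta> * real n" by blast
  have npos: "0 < real n" using n(1) N1(2) by simp
  have small: "2 * real M * B / real n < \<epsilon> / 4"
  proof -
    have "8 * real M * B / \<epsilon> < real n" using N1' N1(3) n(1) by linarith
    then have "8 * real M * B < real n * \<epsilon>" using e by (simp add: divide_less_eq)
    then show ?thesis using npos by (simp add: divide_less_eq mult.commute mult.left_commute)
  qed
  have "\<forall>f\<in>F. \<bar>Ssum T f n x / real n - integral\<^sup>L \<nu> f\<bar> < \<epsilon>"
  proof
    fix f assume fF: "f \<in> F"
    define af where "af s = f ((T ^^ s) x)" for s
    have afB: "\<bar>af i\<bar> \<le> B" for i unfolding af_def using B[OF fF] .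
    have S1: "Ssum T f n x = (\<Sum>s<n. af s)" unfolding Ssum_def af_def ..
    have S2: "Ssum T f M ((T ^^ s) x) = (\<Sum>t<M. af (s + t))" for s
      unfolding Ssum_def af_def funpow_comm_apply ..
    have D: "\<bar>(\<Sum>s<n. Ssum T f M ((T ^^ s) x) / real M) - Ssum T f n x\<bar> \<le> 2 * real M * B"
      unfolding S1 S2 by (rule double_avg[OF afB M1])
    have E0: "(\<Sum>s<n. \<bar>Ssum T f M ((T ^^ s) x) / real M - c f\<bar>) \<le> (\<Sum>s<n. h M ((T ^^ s) x))"
    proof (rule sum_mono)
      fix s assume "s \<in> {..<n}"
      show "\<bar>Ssum T f M ((T ^^ s) x) / real M - c f\<bar> \<le> h M ((T ^^ s) x)"
        unfolding h_def using F(1) fF by (intro member_le_sum) auto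
    qed
    have E: "(\<Sum>s<n. \<bar>Ssum T f M ((T ^^ s) x) / real M - c f\<bar>) \<le> Ssum T (h M) n x"
      using E0 by (simp add: Ssum_def)
    have "\<bar>Ssum T f n x - real n * c f\<bar>
        \<le> \<bar>(\<Sum>s<n. Ssum T f M ((T ^^ s) x) / real M) - Ssum T f n x\<bar>
          + \<bar>(\<Sum>s<n. Ssum T f M ((T ^^ s) x) / real M - c f)\<bar>"
      by (simp add: sum_subtractf abs_le_iff) linarith
    also have "\<dots> \<le> 2 * real M * B + (\<Sum>s<n. \<bar>Ssum T f M ((T ^^ s) x) / real M - c f\<bar>)"
      using D by (intro add_mono sum_abs)
    also have "\<dots> < 2 * real M * B + 2 * \<eta> * real n" using E n(3) by linarith
    finally have "\<bar>Ssum T f n x - real n * c f\<bar> / real n < (2 * real M * B + 2 * \<eta> * real n) / real n"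
      using npos by (simp add: divide_strict_right_mono)
    also have "\<dots> = 2 * real M * B / real n + 2 * \<eta>" using npos by (simp add: field_simps)
    also have "\<dots> < \<epsilon>" using small e unfolding \<eta>_def by linarith
    finally have "\<bar>Ssum T f n x - real n * c f\<bar> / real n < \<epsilon>" .
    moreover have "\<bar>Ssum T f n x - real n * c f\<bar> / real n = \<bar>Ssum T f n x / real n - c f\<bar>"
      using npos by (simp add: field_simps abs_divide[symmetric])
    ultimately show "\<bar>Ssum T f n x / real n - integral\<^sup>L \<nu> f\<bar> < \<epsilon>" unfolding c_def by simp
  qed
  then show ?thesis using n(1) N1 by (intro exI[of _ n]) auto
qed

end




fun cmin :: "nat \<Rightarrow> (real \<times> 'a::metric_space) list \<Rightarrow> 'a \<Rightarrow> real" where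
  "cmin L [] y = 0"
| "cmin L [p] y = fst p + real L * dist y (snd p)"
| "cmin L (p # q # ps) y = min (fst p + real L * dist y (snd p)) (cmin L (q # ps) y)"

lemma cmin_le: "p \<in> set ps \<Longrightarrow> cmin L ps y \<le> fst p + real L * dist y (snd p)"
  by (induction L ps y rule: cmin.induct) (auto simp: min.coboundedI1 min.coboundedI2)

lemma cmin_attained: "ps \<noteq> [] \<Longrightarrow> \<exists>p\<in>set ps. cmin L ps y = fst p + real L * dist y (snd p)"
proof (induction L ps y rule: cmin.induct)
  case (3 L p q ps y)
  show ?case
  proof (cases "fst p + real L * dist y (snd p) \<le> cmin L (q # ps) y")
    case True then show ?thesis by (simp add: min_absorb1)
  next
    case False
    then have "cmin L (p # q # ps) y = cmin L (q # ps) y" by (simp add: min_absorb2)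
    moreover obtain p' where "p' \<in> set (q # ps)" "cmin L (q # ps) y = fst p' + real L * dist y (snd p')"
      using "3.IH" by blast
    ultimately show ?thesis by auto
  qed
qed auto

lemma cmin_cont: "continuous_on UNIV (cmin L ps)"
proof (induction L ps rule: cmin.induct[where P="\<lambda>L ps y. continuous_on UNIV (cmin L ps)"])
  case (1 L y) then show ?case by (simp add: continuous_on_const)
next
  case (2 L p y)
  have "continuous_on UNIV (\<lambda>y. fst p + real L * dist y (snd p))"
    by (intro continuous_intros)
  then show ?case by simp
next
  case (3 L p q ps y)
  have "continuous_on UNIV (\<lambda>y. min (fst p + real L * dist y (snd p)) (cmin L (q # ps) y))"
    using "3" by (intro continuous_intros) auto
  then show ?case by simp
qed

lemma dense_family:
  fixes dummy :: "'a::metric_space"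
  assumes cpt: "compact (UNIV::'a set)"
  obtains g :: "nat \<Rightarrow> 'a \<Rightarrow> real" where "\<And>j. continuous_on UNIV (g j)"
     and "\<And>f \<epsilon>. continuous_on UNIV f \<Longrightarrow> 0 < \<epsilon> \<Longrightarrow> \<exists>j. \<forall>y. \<bar>f y - g j y\<bar> \<le> \<epsilon>"
proof -
  have netex: "\<exists>Q. finite Q \<and> (\<forall>y::'a. \<exists>q\<in>Q. dist y q < r)" if r: "0 < r" for r :: real
  proof -
    have cov: "(UNIV::'a set) \<subseteq> (\<Union>c\<in>(UNIV::'a set). ball c r)"
    proof
      fix y :: 'a assume "y \<in> UNIV"
      have "y \<in> ball y r" using r by simp
      then show "y \<in> (\<Union>c\<in>UNIV. ball c r)" by blast
    qed
    have "\<exists>C'::'a set. finite C' \<and> UNIV \<subseteq> (\<Union>c\<in>C'. ball c r)"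
      by (rule compactE_image[OF cpt _ cov]) (simp, blast)
    then obtain C' :: "'a set" where C': "finite C'" "UNIV \<subseteq> (\<Union>c\<in>C'. ball c r)" by blast
    have "\<forall>y::'a. \<exists>q\<in>C'. dist y q < r"
    proof
      fix y :: 'a
      obtain q where q: "q \<in> C'" "y \<in> ball q r" using C'(2) by blast
      then have "dist q y < r" by (simp only: mem_ball)
      then have "dist y q < r" by (simp only: dist_commute)
      then show "\<exists>q\<in>C'. dist y q < r" using q(1) by blast
    qed
    then show ?thesis using C'(1) by blast
  qed
  define net where "net m = (SOME Q. finite Q \<and> (\<forall>y::'a. \<exists>q\<in>Q. dist y q < inverse (real (Suc m))))" for m
  have net: "finite (net m) \<and> (\<forall>y::'a. \<exists>q\<in>net m. dist y q < inverse (real (Suc m)))" for m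
    unfolding net_def by (rule someI_ex) (rule netex, simp)
  define D where "D = (\<Union>m. net m)"
  have Dc: "countable D" unfolding D_def using net by (intro countable_UN) (auto intro: countable_finite)
  define G where "G = {(L, ps) | (L::nat) (ps::(real \<times> 'a) list). ps \<noteq> [] \<and> set ps \<subseteq> \<rat> \<times> D}"
  have Gc: "countable G"
  proof (rule countable_subset)
    show "G \<subseteq> (UNIV::nat set) \<times> lists (\<rat> \<times> D)" unfolding G_def by auto
    show "countable ((UNIV::nat set) \<times> lists (\<rat> \<times> D))" using Dc countable_rat by (intro countable_SIGMA countable_lists) (auto intro: countableI_type)
  qed
  obtain q0 where q0: "q0 \<in> net 0" using net[of 0] by blast
  have "(0::nat, [(0::real, q0)]) \<in> G" unfolding G_def D_def using q0 by auto
  then have Gne: "G \<noteq> {}" by blast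
  define g where "g j = (case from_nat_into G j of (L, ps) \<Rightarrow> cmin L ps)" for j
  have gc: "continuous_on UNIV (g j)" for j unfolding g_def by (simp add: case_prod_beta cmin_cont)
  have approx: "\<exists>j. \<forall>y. \<bar>f y - g j y\<bar> \<le> \<epsilon>" if fc: "continuous_on UNIV f" and ep: "0 < \<epsilon>" for f \<epsilon>
  proof -
    define e where "e = \<epsilon> / 3"
    have e: "0 < e" using ep unfolding e_def by simp
    obtain Bd where Bd0: "Bd > 0" and Bd: "\<And>y. \<bar>f y\<bar> \<le> Bd" using cont_bounded[OF cpt fc] by blast
    have "uniformly_continuous_on UNIV f" using compact_uniformly_continuous[OF fc cpt] .
    then have "\<exists>d>0. \<forall>x\<in>UNIV. \<forall>x'\<in>UNIV. dist x' x < d \<longrightarrow> dist (f x') (f x) < e"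
      unfolding uniformly_continuous_on_def using e by (elim allE[of _ e]) simp
    then obtain \<delta> where \<delta>: "\<delta> > 0" and uc0: "\<forall>x\<in>UNIV. \<forall>x'\<in>UNIV. dist x' x < \<delta> \<longrightarrow> dist (f x') (f x) < e"
      by blast
    have uc: "dist (f z) (f y) < e" if "dist z y < \<delta>" for y z using uc0 that by simp
    obtain L :: nat where L: "(2 * Bd + e) / \<delta> < real L" using reals_Archimedean2 by blast
    have Ld: "2 * Bd + e < real L * \<delta>" using L by (simp only: pos_divide_less_eq[OF \<delta>])
    define \<delta>' where "\<delta>' = min \<delta> (e / (real L + 1))"
    have "0 < e / (real L + 1)" using e by simp
    then have d'pos: "0 < \<delta>'" unfolding \<delta>'_def using \<delta> by simp
    obtain m where m: "inverse (real (Suc m)) < \<delta>'" using reals_Archimedean[OF d'pos] by blast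
    obtain qs where qs: "set qs = net m" using finite_list[OF conjunct1[OF net[of m]]] by blast
    define r where "r q = (SOME r. r \<in> \<rat> \<and> f q - e < r \<and> r < f q + e)" for q
    have r: "r q \<in> \<rat> \<and> f q - e < r q \<and> r q < f q + e" for q
    proof -
      have "f q - e < f q + e" using e by simp
      from Rats_dense_in_real[OF this] obtain r0 where "r0 \<in> \<rat>" "f q - e < r0" "r0 < f q + e" by blast
      then have "\<exists>r. r \<in> \<rat> \<and> f q - e < r \<and> r < f q + e" by blast
      from someI_ex[OF this] show ?thesis unfolding r_def .
    qed
    define ps where "ps = map (\<lambda>q. (r q, q)) qs"
    have psne: "ps \<noteq> []"
    proof -
      obtain q where "q \<in> net m" using net[of m] by blast
      then show ?thesis unfolding ps_def using qs by auto
    qed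
    have "set ps \<subseteq> \<rat> \<times> D"
    proof
      fix p assume "p \<in> set ps"
      then obtain q where q: "q \<in> set qs" "p = (r q, q)" unfolding ps_def by auto
      have "r q \<in> \<rat>" using r[of q] by blast
      moreover have "q \<in> D" unfolding D_def using q(1) qs by blast
      ultimately show "p \<in> \<rat> \<times> D" using q(2) by simp
    qed
    then have "(L, ps) \<in> G" unfolding G_def using psne by blast
    then obtain j where j: "from_nat_into G j = (L, ps)" using from_nat_into_surj[OF Gc] by blast
    have gj: "g j = cmin L ps" unfolding g_def j by simp
    have "\<bar>f y - cmin L ps y\<bar> \<le> \<epsilon>" for y
    proof -
      obtain q where q: "q \<in> net m" "dist y q < inverse (real (Suc m))" using net[of m] by blast
      have dq1: "dist y q < \<delta>" using q(2) m unfolding \<delta>'_def by simp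
      have dq2: "dist y q < e / (real L + 1)" using q(2) m unfolding \<delta>'_def by simp
      have rq: "f q - e < r q" "r q < f q + e" using r[of q] by auto
      have "(r q, q) \<in> set ps" unfolding ps_def using q(1) qs by auto
      then have c1: "cmin L ps y \<le> r q + real L * dist y q" using cmin_le[of "(r q, q)" ps L y] by simp
      have c2: "real L * dist y q \<le> e"
      proof -
        have "real L * dist y q \<le> real L * (e / (real L + 1))" using dq2 by (intro mult_left_mono) auto
        also have "\<dots> \<le> e" using e by (simp add: field_simps)
        finally show ?thesis .
      qed
      have "dist (f q) (f y) < e" using uc[of q y] dq1 dist_commute[of q y] by simp
      then have c3: "\<bar>f q - f y\<bar> < e" by (simp add: dist_real_def)
      have up: "cmin L ps y \<le> f y + 3 * e" using c1 c2 c3 rq by linarith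
      obtain p where p: "p \<in> set ps" "cmin L ps y = fst p + real L * dist y (snd p)"
        using cmin_attained[OF psne] by blast
      then obtain q' where q': "q' \<in> set qs" "p = (r q', q')" unfolding ps_def by auto
      have pv: "cmin L ps y = r q' + real L * dist y q'" using p(2) q'(2) by simp
      have rq': "f q' - e < r q'" "r q' < f q' + e" using r[of q'] by auto
      have dnn: "0 \<le> real L * dist y q'" by simp
      have low: "f y - 2 * e \<le> cmin L ps y"
      proof (cases "dist y q' < \<delta>")
        case True
        have "dist (f q') (f y) < e" using uc[of q' y] True dist_commute[of q' y] by simp
        then have "\<bar>f q' - f y\<bar> < e" by (simp add: dist_real_def)
        then show ?thesis using pv rq' dnn by linarith
      next
        case False
        then have "real L * \<delta> \<le> real L * dist y q'" by (intro mult_left_mono) auto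
        then have "2 * Bd + e < real L * dist y q'" using Ld by linarith
        moreover have "\<bar>f q'\<bar> \<le> Bd" "\<bar>f y\<bar> \<le> Bd" using Bd by auto
        ultimately show ?thesis using pv rq' e by linarith
      qed
      show ?thesis using up low unfolding e_def by linarith
    qed
    then have "\<forall>y. \<bar>f y - g j y\<bar> \<le> \<epsilon>" unfolding gj by blast
    then show ?thesis by blast
  qed
  show ?thesis by (rule that[of g, OF gc approx])
qed




context erg begin

lemma integral_close:
  fixes f g :: "'a \<Rightarrow> real" and r :: real
  assumes fc: "continuous_on UNIV f" and gc: "continuous_on UNIV g"
    and fg: "\<And>y. \<bar>f y - g y\<bar> \<le> r"
  shows "\<bar>integral\<^sup>L \<nu> f - integral\<^sup>L \<nu> g\<bar> \<le> r"
proof -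
  have ic: "integrable \<nu> (\<lambda>_. r)" using integrable_bounded[of "\<lambda>_. r" "\<bar>r\<bar>"] by simp
  have ic': "integrable \<nu> (\<lambda>_. - r)" using integrable_bounded[of "\<lambda>_. - r" "\<bar>r\<bar>"] by simp
  have id: "integrable \<nu> (\<lambda>y. f y - g y)" using integrable_cont[OF fc] integrable_cont[OF gc] by simp
  have eq: "integral\<^sup>L \<nu> f - integral\<^sup>L \<nu> g = integral\<^sup>L \<nu> (\<lambda>y. f y - g y)"
    using integrable_cont[OF fc] integrable_cont[OF gc] by (simp add: Bochner_Integration.integral_diff)
  have p1: "f y - g y \<le> r" for y using fg[of y] by (simp add: abs_le_iff)
  have p2: "- r \<le> f y - g y" for y using fg[of y] by (simp add: abs_le_iff)
  have "integral\<^sup>L \<nu> (\<lambda>y. f y - g y) \<le> integral\<^sup>L \<nu> (\<lambda>_. r)"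
    using id ic p1 by (intro integral_mono) auto
  moreover have "integral\<^sup>L \<nu> (\<lambda>_. - r) \<le> integral\<^sup>L \<nu> (\<lambda>y. f y - g y)"
    using id ic' p2 by (intro integral_mono) auto
  ultimately show ?thesis unfolding eq integral_const_nu by (simp add: abs_le_iff)
qed

end

theorem corollary2p2:
  fixes T :: "'a::metric_space \<Rightarrow> 'a" and x :: 'a and \<nu> :: "'a measure"
  assumes "compact (UNIV :: 'a set)"
    and "continuous_on UNIV T"
    and "\<nu> \<in> V_log T x"
    and "ergodic T \<nu>"
  shows "\<nu> \<in> V T x"
proof -
  from assms(3) obtain Ns where bp: "borel_prob \<nu>" and Ns: "strict_mono Ns" "\<forall>k. 2 \<le> Ns k"
      and wc: "weak_star_conv (\<lambda>k. Emp_log T x (Ns k)) \<nu>"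
    unfolding V_log_def by blast
  have pr: "prob_space \<nu>" "sets \<nu> = sets borel" using bp unfolding borel_prob_def by auto
  interpret erg T \<nu> using assms(1,2,4) pr by (intro erg.intro)
  have log: "(\<lambda>k. integral\<^sup>L (Emp_log T x (Ns k)) f) \<longlonglongrightarrow> integral\<^sup>L \<nu> f"
    if "continuous_on UNIV f" for f :: "'a \<Rightarrow> real"
    using wc that unfolding weak_star_conv_def by blast
  obtain g :: "nat \<Rightarrow> 'a \<Rightarrow> real" where gc: "\<And>j. continuous_on UNIV (g j)"
    and gd: "\<And>f \<epsilon>. continuous_on UNIV f \<Longrightarrow> 0 < \<epsilon> \<Longrightarrow> \<exists>j. \<forall>y. \<bar>f y - g j y\<bar> \<le> \<epsilon>"
    using dense_family[OF assms(1)] by blast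
  define good where "good k N0 n \<longleftrightarrow> N0 \<le> n \<and> 1 \<le> n \<and>
      (\<forall>i\<le>k. \<bar>Ssum T (g i) n x / real n - integral\<^sup>L \<nu> (g i)\<bar> < inverse (real (Suc k)))" for k N0 n
  have ex: "\<exists>n. good k N0 n" for k N0
  proof -
    have "\<exists>n\<ge>N0. 1 \<le> n \<and> (\<forall>f\<in>g ` {..k}. \<bar>Ssum T f n x / real n - integral\<^sup>L \<nu> f\<bar> < inverse (real (Suc k)))"
      using Ns(2) gc by (intro K[OF log Ns(1)]) auto
    then show ?thesis unfolding good_def by auto
  qed
  define pick where "pick k N0 = (SOME n. good k N0 n)" for k N0
  have pick: "good k N0 (pick k N0)" for k N0 unfolding pick_def by (rule someI_ex[OF ex])
  define Ms where "Ms = rec_nat (pick 0 1) (\<lambda>k p. pick (Suc k) (Suc p))"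
  have Ms0: "Ms 0 = pick 0 1" and MsS: "Ms (Suc k) = pick (Suc k) (Suc (Ms k))" for k
    unfolding Ms_def by simp_all
  have gM: "\<exists>N0. good k N0 (Ms k)" for k
    by (cases k) (use pick Ms0 MsS in auto)
  have inc: "Ms k < Ms (Suc k)" for k
    using pick[of "Suc k" "Suc (Ms k)"] unfolding MsS good_def by simp
  have sm: "strict_mono Ms" using inc by (simp add: strict_mono_Suc_iff)
  have ge1: "1 \<le> Ms k" for k using gM[of k] unfolding good_def by auto
  have apx: "\<bar>Ssum T (g i) (Ms k) x / real (Ms k) - integral\<^sup>L \<nu> (g i)\<bar> < inverse (real (Suc k))"
    if "i \<le> k" for i k using gM[of k] that unfolding good_def by auto
  have "weak_star_conv (\<lambda>k. Emp T x (Ms k)) \<nu>"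
    unfolding weak_star_conv_def
  proof (intro allI impI)
    fix f :: "'a \<Rightarrow> real" assume fc: "continuous_on UNIV f"
    have eqi: "integral\<^sup>L (Emp T x (Ms k)) f = Ssum T f (Ms k) x / real (Ms k)" for k
      by (rule Emp_integral[OF borel_measurable_continuous_onI[OF fc]])
    show "(\<lambda>k. integral\<^sup>L (Emp T x (Ms k)) f) \<longlonglongrightarrow> integral\<^sup>L \<nu> f"
      unfolding eqi lim_sequentially
    proof (intro allI impI)
      fix r :: real assume r: "0 < r"
      obtain j where j: "\<And>y. \<bar>f y - g j y\<bar> \<le> r / 4" using gd[OF fc, of "r/4"] r by auto
      obtain k0 where k0: "inverse (real (Suc k0)) < r / 4" using reals_Archimedean[of "r/4"] r by auto
      show "\<exists>no. \<forall>k\<ge>no. dist (Ssum T f (Ms k) x / real (Ms k)) (integral\<^sup>L \<nu> f) < r"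
      proof (intro exI[of _ "max j k0"] allI impI)
        fix k assume k: "max j k0 \<le> k"
        define N where "N = Ms k"
        have Npos: "0 < real N" using ge1[of k] unfolding N_def by simp
        have A1: "\<bar>Ssum T f N x / real N - Ssum T (g j) N x / real N\<bar> \<le> r / 4"
        proof -
          have "Ssum T f N x - Ssum T (g j) N x = Ssum T (\<lambda>y. f y - g j y) N x"
            unfolding Ssum_def by (simp add: sum_subtractf)
          moreover have "\<bar>Ssum T (\<lambda>y. f y - g j y) N x\<bar> \<le> real N * (r / 4)" by (rule Ssum_bound[OF j])
          ultimately have e2: "\<bar>Ssum T f N x - Ssum T (g j) N x\<bar> \<le> real N * (r / 4)" by simp
          have e1: "\<bar>Ssum T f N x / real N - Ssum T (g j) N x / real N\<bar> = \<bar>Ssum T f N x - Ssum T (g j) N x\<bar> / real N"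
            using Npos by (simp add: diff_divide_distrib[symmetric] abs_divide)
          show ?thesis unfolding e1 pos_divide_le_eq[OF Npos] using e2 by (simp add: mult.commute)
        qed
        have A2: "\<bar>Ssum T (g j) N x / real N - integral\<^sup>L \<nu> (g j)\<bar> < r / 4"
        proof -
          have "\<bar>Ssum T (g j) N x / real N - integral\<^sup>L \<nu> (g j)\<bar> < inverse (real (Suc k))"
            unfolding N_def using apx[of j k] k by simp
          moreover have "inverse (real (Suc k)) \<le> inverse (real (Suc k0))"
            using k by (intro le_imp_inverse_le) auto
          ultimately show ?thesis using k0 by linarith
        qed
        have A3: "\<bar>integral\<^sup>L \<nu> f - integral\<^sup>L \<nu> (g j)\<bar> \<le> r / 4"
          by (rule integral_close[OF fc gc j])
        have "dist (Ssum T f N x / real N) (integral\<^sup>L \<nu> f) < r"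
          unfolding dist_real_def using A1 A2 A3 r by linarith
        then show "dist (Ssum T f (Ms k) x / real (Ms k)) (integral\<^sup>L \<nu> f) < r" unfolding N_def .
      qed
    qed
  qed
  then show ?thesis unfolding V_def using bp sm ge1 by blast
qed


end
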